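(* For every $n\geq 1$, the Fibonacci-sum set-graph $G^F_{A^{(n)}}$ is connected.
   Context: Let $\mathcal{F}=\{f_m\}_{m\ge 0}$ be the Fibonacci numbers, $f_0=0$, $f_1=1$, $f_m=f_{m-1}+f_{m-2}$. For $n\in\mathbb{N}$ let $A^{(n)}=\{1,2,\dots,n\}$. The Fibonacci-sum set-graph $G^F_{A^{(n)}}$ is the multigraph (loops and multiple edges allowed) whose vertices are in bijection with the nonempty subsets of $A^{(n)}$; between the vertices corresponding to distinct subsets $S,T$ there is one edge for each pair $(i',j')$ with $i'\in S$, $j'\in T$, $i'\neq j'$ and $i'+j'\in\mathcal{F}$, and at the vertex corresponding to $S$ there is one loop for each pair of distinct elements $i',j'\in S$ with $i'+j'\in\mathcal{F}$. *)

theory Defs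
  imports Main "HOL-Number_Theory.Fib"
begin

definition is_fib :: "nat \<Rightarrow> bool" where
  "is_fib m \<longleftrightarrow> (\<exists>k. fib k = m)"

text \<open>Vertices of the Fibonacci-sum set-graph on A^(n) = {1..n}: nonempty subsets.\<close>
definition fsg_vertices :: "nat \<Rightarrow> nat set set" where
  "fsg_vertices n = {S. S \<subseteq> {1..n} \<and> S \<noteq> {}}"

definition fsg_edge_mult :: "nat set \<Rightarrow> nat set \<Rightarrow> nat" where
  "fsg_edge_mult S T = card {(i, j). i \<in> S \<and> j \<in> T \<and> i \<noteq> j \<and> is_fib (i + j)}"

definition fsg_loop_mult :: "nat set \<Rightarrow> nat" where
  "fsg_loop_mult S = card {{i, j} | i j. i \<in> S \<and> j \<in> S \<and> i \<noteq> j \<and> is_fib (i + j)}"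

definition fsg_adj :: "nat \<Rightarrow> nat set \<Rightarrow> nat set \<Rightarrow> bool" where
  "fsg_adj n S T \<longleftrightarrow> S \<in> fsg_vertices n \<and> T \<in> fsg_vertices n \<and> S \<noteq> T
     \<and> fsg_edge_mult S T > 0"

text \<open>A (multi)graph is connected: nonempty vertex set, and any two vertices are joined
  by a walk (loops are irrelevant for connectivity).\<close>
definition fsg_connected :: "nat \<Rightarrow> bool" where
  "fsg_connected n \<longleftrightarrow> fsg_vertices n \<noteq> {} \<and>
     (\<forall>S\<in>fsg_vertices n. \<forall>T\<in>fsg_vertices n. (fsg_adj n)\<^sup>*\<^sup>* S T)"

end

theory Submission
  imports Defs
begin

lemma fib_grow: "n < fib (n + 2)"
proof (induction n)
  case 0 then show ?case by simp
next
  case (Suc n)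
  have "fib (Suc n + 2) = fib (n + 2) + fib (n + 1)"
    by (simp add: numeral_eq_Suc)
  moreover have "fib (n+1) > 0" by (simp add: fib_neq_0_nat)
  ultimately show ?case using Suc by simp
qed

lemma partner:
  fixes i :: nat
  assumes "i \<ge> 2"
  shows "\<exists>j. 1 \<le> j \<and> j < i \<and> is_fib (i + j)"
proof -
  define k where "k = (LEAST k. i < fib k)"
  have ex: "i < fib (i+2)" by (rule fib_grow)
  have k1: "i < fib k" unfolding k_def by (rule LeastI[of _ "i+2"], rule ex)
  have kmin: "\<And>m. m < k \<Longrightarrow> fib m \<le> i"
    unfolding k_def using not_less_Least by (metis not_le)
  have "k \<ge> 3"
  proof (rule ccontr)
    assume "\<not> 3 \<le> k"
    then have "k = 0 \<or> k = 1 \<or> k = 2" by auto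
    then show False using k1 assms by auto
  qed
  then obtain m where m: "k = m + 3" using le_Suc_ex by (metis add.commute)
  have f: "fib k = fib (m+2) + fib (m+1)"
    using m by (simp add: numeral_eq_Suc)
  have a: "fib (m+2) \<le> i" using kmin[of "m+2"] m by simp
  have b: "fib (m+1) \<le> i" using kmin[of "m+1"] m by simp
  have c: "fib (m+1) < fib (m+2)"
  proof (cases m)
    case 0 then show ?thesis using k1 a b f assms by simp
  next
    case (Suc p)
    have "fib (m+2) = fib (m+1) + fib m"
      by (simp add: numeral_eq_Suc)
    moreover have "fib m > 0" using Suc fib_neq_0_nat by blast
    ultimately show ?thesis by simp
  qed
  define j where "j = fib k - i"
  have "1 \<le> j" "j < i" using k1 f a b c unfolding j_def by auto
  moreover have "is_fib (i + j)" unfolding is_fib_def j_def using k1 by auto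
  ultimately show ?thesis by blast
qed

lemma partner2:
  fixes i n :: nat
  assumes "1 \<le> i" "i \<le> n" "n \<ge> 2"
  shows "\<exists>j. 1 \<le> j \<and> j \<le> n \<and> j \<noteq> i \<and> is_fib (i + j)"
proof (cases "i = 1")
  case True
  have "is_fib 3" unfolding is_fib_def
    by (rule exI[of _ 4]) (simp add: numeral_eq_Suc)
  then show ?thesis using True assms by (intro exI[of _ 2]) (simp add: numeral_3_eq_3)
next
  case False
  then obtain j where "1 \<le> j \<and> j < i \<and> is_fib (i + j)" using partner assms by force
  then show ?thesis using assms by (intro exI[of _ j]) auto
qed

lemma card_pos:
  assumes "finite S" "finite T" "(i,j) \<in> {(i, j). i \<in> S \<and> j \<in> T \<and> i \<noteq> j \<and> is_fib (i + j)}"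
  shows "fsg_edge_mult S T > 0"
proof -
  have "{(i, j). i \<in> S \<and> j \<in> T \<and> i \<noteq> j \<and> is_fib (i + j)} \<subseteq> S \<times> T" by auto
  then have "finite {(i, j). i \<in> S \<and> j \<in> T \<and> i \<noteq> j \<and> is_fib (i + j)}"
    using assms finite_subset by blast
  then show ?thesis unfolding fsg_edge_mult_def using assms(3) card_gt_0_iff by blast
qed

theorem corollary2p2:
  fixes n :: nat
  assumes "n \<ge> 1"
  shows "fsg_connected n"
proof (cases "n = 1")
  case True
  then have "fsg_vertices n = {{1}}" unfolding fsg_vertices_def by auto
  then show ?thesis unfolding fsg_connected_def by auto
next
  case False
  then have n2: "n \<ge> 2" using assms by simp
  define A where "A = {1..n}"
  have Av: "A \<in> fsg_vertices n" unfolding A_def fsg_vertices_def using assms by auto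
  have fin: "\<And>S. S \<in> fsg_vertices n \<Longrightarrow> finite S"
    unfolding fsg_vertices_def using finite_subset by blast
  have toA: "(fsg_adj n)\<^sup>*\<^sup>* S A" if S: "S \<in> fsg_vertices n" for S
  proof (cases "S = A")
    case True then show ?thesis by simp
  next
    case False
    obtain i where i: "i \<in> S" using S unfolding fsg_vertices_def by auto
    then have "1 \<le> i" "i \<le> n" using S unfolding fsg_vertices_def by auto
    then obtain j where j: "1 \<le> j \<and> j \<le> n \<and> j \<noteq> i \<and> is_fib (i + j)"
      using partner2 n2 by blast
    have "fsg_edge_mult S A > 0"
      using card_pos[of S A i j] fin[OF S] fin[OF Av] i j unfolding A_def by auto
    then have "fsg_adj n S A" unfolding fsg_adj_def using S Av False by auto
    then show ?thesis by auto
  qed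
  have fromA: "(fsg_adj n)\<^sup>*\<^sup>* A T" if T: "T \<in> fsg_vertices n" for T
  proof (cases "T = A")
    case True then show ?thesis by simp
  next
    case False
    obtain i where i: "i \<in> T" using T unfolding fsg_vertices_def by auto
    then have "1 \<le> i" "i \<le> n" using T unfolding fsg_vertices_def by auto
    then obtain j where j: "1 \<le> j \<and> j \<le> n \<and> j \<noteq> i \<and> is_fib (i + j)"
      using partner2 n2 by blast
    have "fsg_edge_mult A T > 0"
      using card_pos[of A T j i] fin[OF T] fin[OF Av] i j unfolding A_def by (auto simp: add.commute)
    then have "fsg_adj n A T" unfolding fsg_adj_def using T Av False by auto
    then show ?thesis by auto
  qed
  have "\<forall>S\<in>fsg_vertices n. \<forall>T\<in>fsg_vertices n. (fsg_adj n)\<^sup>*\<^sup>* S T"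
    using toA fromA rtranclp_trans by metis
  then show ?thesis unfolding fsg_connected_def using Av by blast
qed

end
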